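(* Let $R=\bigoplus_{\alpha\in\Gamma}R_{\alpha}$ be a graded integral domain, let $T$ be a homogeneous overring of $R$, and let $\star$ (resp. $\star'$) be a semistar operation on $R$ (resp. on $T$). Then $T$ is a homogeneously $(\star,\star')$-linked overring of $R$ if and only if $\mathrm{NA}(R,\star)\subseteq\mathrm{NA}(T,\star')$.
   Context: $\Gamma$ is a commutative cancellative monoid (written additively) whose quotient group $\langle\Gamma\rangle$ is torsion-free. A graded integral domain $R=\bigoplus_{\alpha\in\Gamma}R_\alpha$ is an integral domain that is the direct sum of additive subgroups $R_\alpha$ with $R_\alpha R_\beta\subseteq R_{\alpha+\beta}$. $K$ is its quotient field, $H$ the set of nonzero homogeneous elements, $R_H=\bigoplus_{\alpha\in\langle\Gamma\rangle}(R_H)_\alpha$ the homogeneous quotient field. A homogeneous overring of $R$ is a ring $T$ with $R\subseteq T\subseteq R_H$ and $T=\bigoplus_{\alpha\in\langle\Gamma\rangle}(T\cap(R_H)_\alpha)$; it is a graded integral domain with $T_\alpha=T\cap(R_H)_\alpha$. For a graded domain $S$ (such as $R$ or $T$), $a\in S$, $C_S(a)$ is the ideal of $S$ generated by the homogeneous components of $a$, and for $f=f_0+\cdots+f_nX^n\in S[X]$, $A_f:=\sum_iC_S(f_i)$ (computed in $S$). A semistar operation on $S$ is a map $\star$ from the set of nonzero $S$-submodules of $K$ to itself such that for all $0\ne x\in K$ and $E,F$: $(xE)^\star=xE^\star$; $E\subseteq F\Rightarrow E^\star\subseteq F^\star$; $E\subseteq E^\star$; $(E^\star)^\star=E^\star$.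 $N(\star):=\{f\in S[X]: f\ne0,\ A_f^\star=S^\star\}$ and $\mathrm{NA}(S,\star):=S[X]_{N(\star)}$. $T$ is a homogeneously $(\star,\star')$-linked overring of $R$ if for each nonzero homogeneous finitely generated ideal $F$ of $R$, $F^\star=R^\star$ implies $(FT)^{\star'}=T^{\star'}$. *)

theory Defs
  imports "HOL-Computational_Algebra.Polynomial" "HOL-Computational_Algebra.Fraction_Field"
begin

(* Everything lives inside a field 'k, which is assumed (in the theorem) to be the
   quotient field K of R.  Gradings are indexed by an abelian group 'g containing
   the monoid Gamma; components outside Gamma are {0}. *)

definition is_subring :: "'k::field set \<Rightarrow> bool" where
  "is_subring S \<longleftrightarrow> 0 \<in> S \<and> 1 \<in> S \<and>
     (\<forall>x\<in>S. \<forall>y\<in>S. x + y \<in> S \<and> x - y \<in> S \<and> x * y \<in> S)"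

definition additive_subgroup :: "'k::field set \<Rightarrow> bool" where
  "additive_subgroup A \<longleftrightarrow> 0 \<in> A \<and> (\<forall>x\<in>A. \<forall>y\<in>A. x - y \<in> A)"

definition is_decomp :: "('g \<Rightarrow> 'k::field set) \<Rightarrow> 'k \<Rightarrow> ('g \<Rightarrow> 'k) \<Rightarrow> bool" where
  "is_decomp A a f \<longleftrightarrow> finite {\<alpha>. f \<alpha> \<noteq> 0} \<and> (\<forall>\<alpha>. f \<alpha> \<in> A \<alpha>) \<and>
     a = (\<Sum>\<alpha>\<in>{\<alpha>. f \<alpha> \<noteq> 0}. f \<alpha>)"

text \<open>R = direct sum of the R_alpha, alpha in Gamma; Gamma a submonoid of 'g
  (hence cancellative) whose generated group is torsion-free.\<close>
definition graded_domain :: "'g::ab_group_add set \<Rightarrow> 'k::field set \<Rightarrow> ('g \<Rightarrow> 'k set) \<Rightarrow> bool" where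
  "graded_domain \<Gamma> R A \<longleftrightarrow>
     is_subring R \<and>
     0 \<in> \<Gamma> \<and> (\<forall>a\<in>\<Gamma>. \<forall>b\<in>\<Gamma>. a + b \<in> \<Gamma>) \<and>
     (\<forall>g\<in>{a - b | a b. a \<in> \<Gamma> \<and> b \<in> \<Gamma>}. \<forall>n::nat. n > 0 \<longrightarrow> (\<Sum>i<n. g) = 0 \<longrightarrow> g = 0) \<and>
     (\<forall>\<alpha>. additive_subgroup (A \<alpha>)) \<and>
     (\<forall>\<alpha>. \<alpha> \<notin> \<Gamma> \<longrightarrow> A \<alpha> = {0}) \<and>
     (\<forall>\<alpha> \<beta>. \<forall>x\<in>A \<alpha>. \<forall>y\<in>A \<beta>. x * y \<in> A (\<alpha> + \<beta>)) \<and>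
     (\<forall>a. a \<in> R \<longleftrightarrow> (\<exists>f. is_decomp A a f)) \<and>
     (\<forall>a f g. is_decomp A a f \<and> is_decomp A a g \<longrightarrow> f = g)"

definition homog :: "('g \<Rightarrow> 'k::field set) \<Rightarrow> 'k set" where
  "homog A = {x. x \<noteq> 0 \<and> (\<exists>\<alpha>. x \<in> A \<alpha>)}"

definition RH :: "'k::field set \<Rightarrow> ('g \<Rightarrow> 'k set) \<Rightarrow> 'k set" where
  "RH R A = {r / h | r h. r \<in> R \<and> h \<in> homog A}"

definition RH_comp :: "('g::ab_group_add \<Rightarrow> 'k::field set) \<Rightarrow> 'g \<Rightarrow> 'k set" where
  "RH_comp A \<alpha> = {a / b | a b \<beta> \<gamma>. a \<in> A \<beta> \<and> b \<in> A \<gamma> \<and> b \<noteq> 0 \<and> \<alpha> = \<beta> - \<gamma>}"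

definition over_comp :: "'k::field set \<Rightarrow> ('g::ab_group_add \<Rightarrow> 'k set) \<Rightarrow> 'g \<Rightarrow> 'k set" where
  "over_comp T A \<alpha> = T \<inter> RH_comp A \<alpha>"

definition homogeneous_overring :: "'k::field set \<Rightarrow> ('g::ab_group_add \<Rightarrow> 'k set) \<Rightarrow> 'k set \<Rightarrow> bool" where
  "homogeneous_overring R A T \<longleftrightarrow> is_subring T \<and> R \<subseteq> T \<and> T \<subseteq> RH R A \<and>
     (\<forall>a\<in>T. \<exists>f. is_decomp (over_comp T A) a f)"

definition comp :: "('g \<Rightarrow> 'k::field set) \<Rightarrow> 'k \<Rightarrow> 'g \<Rightarrow> 'k" where
  "comp A a = (THE f. is_decomp A a f)"

definition ideal_gen :: "'k::field set \<Rightarrow> 'k set \<Rightarrow> 'k set" where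
  "ideal_gen S X = {\<Sum>x\<in>Y. s x * x | Y s. finite Y \<and> Y \<subseteq> X \<and> (\<forall>x\<in>Y. s x \<in> S)}"

definition Cont :: "'k::field set \<Rightarrow> ('g \<Rightarrow> 'k set) \<Rightarrow> 'k \<Rightarrow> 'k set" where
  "Cont S A a = ideal_gen S (range (comp A a))"

definition Af :: "'k::field set \<Rightarrow> ('g \<Rightarrow> 'k set) \<Rightarrow> 'k poly \<Rightarrow> 'k set" where
  "Af S A p = ideal_gen S (\<Union>i. Cont S A (coeff p i))"

definition nz_submodule :: "'k::field set \<Rightarrow> 'k set \<Rightarrow> bool" where
  "nz_submodule S E \<longleftrightarrow> 0 \<in> E \<and> (\<forall>x\<in>E. \<forall>y\<in>E. x + y \<in> E) \<and>
     (\<forall>s\<in>S. \<forall>x\<in>E. s * x \<in> E) \<and> E \<noteq> {0}"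

definition semistar :: "'k::field set \<Rightarrow> ('k set \<Rightarrow> 'k set) \<Rightarrow> bool" where
  "semistar S st \<longleftrightarrow> (\<forall>E F. nz_submodule S E \<and> nz_submodule S F \<longrightarrow>
     nz_submodule S (st E) \<and>
     (\<forall>x. x \<noteq> 0 \<longrightarrow> st ((*) x ` E) = (*) x ` st E) \<and>
     (E \<subseteq> F \<longrightarrow> st E \<subseteq> st F) \<and>
     E \<subseteq> st E \<and> st (st E) = st E)"

definition polys :: "'k::field set \<Rightarrow> 'k poly set" where
  "polys S = {p. \<forall>i. coeff p i \<in> S}"

definition Nset :: "'k::field set \<Rightarrow> ('g \<Rightarrow> 'k set) \<Rightarrow> ('k set \<Rightarrow> 'k set) \<Rightarrow> 'k poly set" where
  "Nset S A st = {f \<in> polys S. f \<noteq> 0 \<and> st (Af S A f) = st S}"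

text \<open>NA(S,star) = S[X]_{N(star)} as a subring of K(X) = fraction field of K[X]\<close>
definition NA :: "'k::field set \<Rightarrow> ('g \<Rightarrow> 'k set) \<Rightarrow> ('k set \<Rightarrow> 'k set) \<Rightarrow> 'k poly fract set" where
  "NA S A st = {Fract g f | g f. g \<in> polys S \<and> f \<in> Nset S A st}"

definition homog_fg_ideal :: "'k::field set \<Rightarrow> ('g \<Rightarrow> 'k set) \<Rightarrow> 'k set \<Rightarrow> bool" where
  "homog_fg_ideal R A F \<longleftrightarrow> F \<noteq> {0} \<and>
     (\<exists>X. finite X \<and> X \<subseteq> R \<and> F = ideal_gen R X) \<and>
     (\<forall>a\<in>F. \<forall>\<alpha>. comp A a \<alpha> \<in> F)"

definition homog_linked ::
  "'k::field set \<Rightarrow> ('g \<Rightarrow> 'k set) \<Rightarrow> ('k set \<Rightarrow> 'k set) \<Rightarrow> 'k set \<Rightarrow> ('k set \<Rightarrow> 'k set) \<Rightarrow> bool" where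
  "homog_linked R A st T st' \<longleftrightarrow>
     (\<forall>F. homog_fg_ideal R A F \<and> st F = st R \<longrightarrow> st' (ideal_gen T F) = st' T)"

end

theory Submission
  imports Defs
begin

definition good_grading :: "'k::field set \<Rightarrow> ('g::ab_group_add \<Rightarrow> 'k set) \<Rightarrow> bool" where
 "good_grading S B \<longleftrightarrow> is_subring S \<and> (\<forall>\<alpha>. 0 \<in> B \<alpha> \<and> (\<forall>x\<in>B \<alpha>. \<forall>y\<in>B \<alpha>. x - y \<in> B \<alpha>)) \<and>
   (\<forall>\<alpha> \<beta>. \<forall>x\<in>B \<alpha>. \<forall>y\<in>B \<beta>. x*y \<in> B (\<alpha>+\<beta>)) \<and> (\<forall>\<alpha>. B \<alpha> \<subseteq> S) \<and>
   (\<forall>a\<in>S. \<exists>f. is_decomp B a f) \<and>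
   (\<forall>D h. finite D \<longrightarrow> (\<forall>\<alpha>\<in>D. h \<alpha> \<in> B \<alpha>) \<longrightarrow> sum h D = 0 \<longrightarrow> (\<forall>\<alpha>\<in>D. h \<alpha> = 0))"

lemma decomp_intro:
  assumes "finite D" "\<And>\<alpha>. \<alpha> \<notin> D \<Longrightarrow> f \<alpha> = 0" "\<And>\<alpha>. f \<alpha> \<in> B \<alpha>" "a = sum f D"
  shows "is_decomp B a f"
proof -
  have sub: "{\<alpha>. f \<alpha> \<noteq> 0} \<subseteq> D" using assms(2) by blast
  have "sum f D = sum f {\<alpha>. f \<alpha> \<noteq> 0}" by (rule sum.mono_neutral_right[OF assms(1) sub]) auto
  thus ?thesis unfolding is_decomp_def using assms finite_subset[OF sub] by auto
qed

lemma decomp_sum: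
  assumes "is_decomp B a f" "finite D" "{\<alpha>. f \<alpha> \<noteq> 0} \<subseteq> D"
  shows "a = sum f D"
proof -
  have "sum f {\<alpha>. f \<alpha> \<noteq> 0} = sum f D" by (rule sum.mono_neutral_left[OF assms(2,3)]) auto
  thus ?thesis using assms(1) unfolding is_decomp_def by auto
qed

lemma decomp_fin: "is_decomp B a f \<Longrightarrow> finite {\<alpha>. f \<alpha> \<noteq> 0}"
  and decomp_in: "is_decomp B a f \<Longrightarrow> f \<alpha> \<in> B \<alpha>"
  unfolding is_decomp_def by auto

lemma subring_props:
  assumes "is_subring S"
  shows "0 \<in> S" "1 \<in> S" "x \<in> S \<Longrightarrow> y \<in> S \<Longrightarrow> x + y \<in> S"
    "x \<in> S \<Longrightarrow> y \<in> S \<Longrightarrow> x - y \<in> S" "x \<in> S \<Longrightarrow> y \<in> S \<Longrightarrow> x * y \<in> S"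
  using assms unfolding is_subring_def by auto

context
  fixes S :: "'k::field set" and B :: "'g::ab_group_add \<Rightarrow> 'k set"
  assumes gg: "good_grading S B"
begin

lemma gg_sub: "is_subring S" using gg unfolding good_grading_def by auto
lemma gg_0: "0 \<in> B \<alpha>" using gg unfolding good_grading_def by auto
lemma gg_diff: "x \<in> B \<alpha> \<Longrightarrow> y \<in> B \<alpha> \<Longrightarrow> x - y \<in> B \<alpha>" using gg unfolding good_grading_def by auto
lemma gg_mult: "x \<in> B \<alpha> \<Longrightarrow> y \<in> B \<beta> \<Longrightarrow> x * y \<in> B (\<alpha>+\<beta>)" using gg unfolding good_grading_def by auto
lemma gg_BS: "x \<in> B \<alpha> \<Longrightarrow> x \<in> S" using gg unfolding good_grading_def by auto
lemma gg_ex: "a \<in> S \<Longrightarrow> \<exists>f. is_decomp B a f" using gg unfolding good_grading_def by auto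
lemma gg_zs: "finite D \<Longrightarrow> (\<forall>\<alpha>\<in>D. h \<alpha> \<in> B \<alpha>) \<Longrightarrow> sum h D = 0 \<Longrightarrow> \<alpha> \<in> D \<Longrightarrow> h \<alpha> = 0"
  using gg unfolding good_grading_def by blast

lemma gg_add: "x \<in> B \<alpha> \<Longrightarrow> y \<in> B \<alpha> \<Longrightarrow> x + y \<in> B \<alpha>"
  using gg_diff[of 0 \<alpha> y] gg_diff[of x \<alpha> "0 - y"] gg_0[of \<alpha>] by simp

lemma gg_sum: "finite I \<Longrightarrow> (\<forall>i\<in>I. x i \<in> B \<alpha>) \<Longrightarrow> sum x I \<in> B \<alpha>"
  by (induction I rule: finite_induct) (auto intro: gg_add gg_0)

lemma gg_unique: assumes "is_decomp B a f" "is_decomp B a g" shows "f = g"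
proof
  fix \<alpha>
  define D where "D = {\<alpha>. f \<alpha> \<noteq> 0} \<union> {\<alpha>. g \<alpha> \<noteq> 0}"
  have fD: "finite D" unfolding D_def using decomp_fin[OF assms(1)] decomp_fin[OF assms(2)] by auto
  have "a = sum f D" by (rule decomp_sum[OF assms(1) fD]) (auto simp: D_def)
  moreover have "a = sum g D" by (rule decomp_sum[OF assms(2) fD]) (auto simp: D_def)
  ultimately have hs: "sum (\<lambda>\<alpha>. f \<alpha> - g \<alpha>) D = 0" by (simp add: sum_subtractf)
  have hB: "\<forall>\<alpha>\<in>D. f \<alpha> - g \<alpha> \<in> B \<alpha>"
    using decomp_in[OF assms(1)] decomp_in[OF assms(2)] gg_diff by simp
  show "f \<alpha> = g \<alpha>"
  proof (cases "\<alpha> \<in> D")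
    case True
    have "f \<alpha> - g \<alpha> = 0" by (rule gg_zs[OF fD hB hs True])
    thus ?thesis by simp
  next
    case False thus ?thesis by (simp add: D_def)
  qed
qed

lemma gg_comp_eq: assumes "is_decomp B a f" shows "comp B a = f"
  unfolding comp_def
proof (rule the_equality)
  show "is_decomp B a f" by (rule assms)
  fix g assume "is_decomp B a g" thus "g = f" using gg_unique[OF _ assms] by blast
qed

lemma gg_comp: "a \<in> S \<Longrightarrow> is_decomp B a (comp B a)"
  using gg_ex gg_comp_eq by metis

lemma gg_homog_comp: assumes "x \<in> B \<beta>" shows "comp B x = (\<lambda>\<alpha>. if \<alpha> = \<beta> then x else 0)"
  by (rule gg_comp_eq, rule decomp_intro[where D="{\<beta>}"]) (auto simp: assms gg_0)

lemma gg_comp_add: assumes "a \<in> S" "b \<in> S" shows "comp B (a+b) = (\<lambda>\<alpha>. comp B a \<alpha> + comp B b \<alpha>)"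
proof (rule gg_comp_eq)
  define D where "D = {\<alpha>. comp B a \<alpha> \<noteq> 0} \<union> {\<alpha>. comp B b \<alpha> \<noteq> 0}"
  have fD: "finite D" unfolding D_def using decomp_fin[OF gg_comp[OF assms(1)]] decomp_fin[OF gg_comp[OF assms(2)]] by auto
  have "a = sum (comp B a) D" by (rule decomp_sum[OF gg_comp[OF assms(1)] fD]) (auto simp: D_def)
  moreover have "b = sum (comp B b) D" by (rule decomp_sum[OF gg_comp[OF assms(2)] fD]) (auto simp: D_def)
  ultimately have "a + b = sum (\<lambda>\<alpha>. comp B a \<alpha> + comp B b \<alpha>) D" by (simp add: sum.distrib)
  thus "is_decomp B (a + b) (\<lambda>\<alpha>. comp B a \<alpha> + comp B b \<alpha>)"
    by (intro decomp_intro[OF fD]) (auto simp: D_def intro: gg_add decomp_in[OF gg_comp[OF assms(1)]] decomp_in[OF gg_comp[OF assms(2)]])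
qed

lemma gg_comp_shift: assumes "s \<in> S" "y \<in> B \<beta>" shows "comp B (s*y) = (\<lambda>\<alpha>. comp B s (\<alpha> - \<beta>) * y)"
proof (rule gg_comp_eq)
  define Ds where "Ds = {\<alpha>. comp B s \<alpha> \<noteq> 0}"
  have fDs: "finite Ds" unfolding Ds_def using decomp_fin[OF gg_comp[OF assms(1)]] .
  define D where "D = (\<lambda>\<gamma>. \<gamma> + \<beta>) ` Ds"
  have fD: "finite D" unfolding D_def using fDs by auto
  have "sum (\<lambda>\<alpha>. comp B s (\<alpha> - \<beta>) * y) D = sum ((\<lambda>\<alpha>. comp B s (\<alpha> - \<beta>) * y) \<circ> (\<lambda>\<gamma>. \<gamma> + \<beta>)) Ds"
    unfolding D_def by (rule sum.reindex) (auto simp: inj_on_def)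
  also have "\<dots> = sum (comp B s) Ds * y" by (simp add: sum_distrib_right)
  also have "sum (comp B s) Ds = s" by (rule decomp_sum[OF gg_comp[OF assms(1)] fDs, symmetric]) (auto simp: Ds_def)
  finally have eq: "s * y = sum (\<lambda>\<alpha>. comp B s (\<alpha> - \<beta>) * y) D" by simp
  have nd: "comp B s (\<alpha> - \<beta>) * y = 0" if "\<alpha> \<notin> D" for \<alpha>
  proof -
    have "\<alpha> = (\<alpha> - \<beta>) + \<beta>" by simp
    hence "\<alpha> - \<beta> \<notin> Ds" using that unfolding D_def by (metis image_eqI)
    thus ?thesis by (simp add: Ds_def)
  qed
  have inB: "comp B s (\<alpha> - \<beta>) * y \<in> B \<alpha>" for \<alpha>
    using gg_mult[OF decomp_in[OF gg_comp[OF assms(1)]] assms(2), of "\<alpha> - \<beta>"] by simp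
  show "is_decomp B (s * y) (\<lambda>\<alpha>. comp B s (\<alpha> - \<beta>) * y)"
    by (rule decomp_intro[OF fD nd inB eq])
qed

lemma gg_one: assumes "b \<in> B \<gamma>" "b \<noteq> 0" shows "1 \<in> B 0"
proof -
  have "comp B (1*b) \<gamma> = comp B 1 (\<gamma> - \<gamma>) * b"
    using gg_comp_shift[OF subring_props(2)[OF gg_sub] assms(1)] by simp
  moreover have "comp B (1*b) \<gamma> = b" using gg_homog_comp[OF assms(1)] by simp
  ultimately have "comp B 1 0 = 1" using assms(2) by simp
  thus ?thesis using decomp_in[OF gg_comp[OF subring_props(2)[OF gg_sub]], of 0] by simp
qed

lemma gg_range_fin: assumes "a \<in> S" shows "finite (range (comp B a))"
proof -
  have "range (comp B a) \<subseteq> comp B a ` {\<alpha>. comp B a \<alpha> \<noteq> 0} \<union> {0}" by auto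
  thus ?thesis using decomp_fin[OF gg_comp[OF assms]] finite_subset by blast
qed

lemma gg_nz_comp: assumes "a \<in> S" "a \<noteq> 0" shows "\<exists>\<alpha>. comp B a \<alpha> \<noteq> 0"
proof (rule ccontr)
  assume "\<not> ?thesis"
  hence "a = sum (comp B a) {}" by (intro decomp_sum[OF gg_comp[OF assms(1)]]) auto
  thus False using assms by simp
qed

end



lemma ig_elem: "a \<in> ideal_gen S Y \<Longrightarrow> \<exists>Y0 s. finite Y0 \<and> Y0 \<subseteq> Y \<and> (\<forall>x\<in>Y0. s x \<in> S) \<and> a = (\<Sum>x\<in>Y0. s x * x)"
  unfolding ideal_gen_def by blast

lemma ig_intro: "finite Y0 \<Longrightarrow> Y0 \<subseteq> Y \<Longrightarrow> (\<forall>x\<in>Y0. s x \<in> S) \<Longrightarrow> (\<Sum>x\<in>Y0. s x * x) \<in> ideal_gen S Y"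
  unfolding ideal_gen_def by blast

lemma ig_0: "0 \<in> ideal_gen S Y"
  using ig_intro[of "{}" Y] by simp

lemma ig_gen: assumes "is_subring S" "y \<in> Y" shows "y \<in> ideal_gen S Y"
  using ig_intro[of "{y}" Y "\<lambda>_. 1" S] subring_props(2)[OF assms(1)] assms(2) by simp

lemma ig_mono: "Y \<subseteq> Y' \<Longrightarrow> S \<subseteq> S' \<Longrightarrow> ideal_gen S Y \<subseteq> ideal_gen S' Y'"
  unfolding ideal_gen_def by blast

lemma ig_add: assumes S: "is_subring S" and a: "a \<in> ideal_gen S Y" and b: "b \<in> ideal_gen S Y"
  shows "a + b \<in> ideal_gen S Y"
proof -
  obtain Y1 s1 where 1: "finite Y1" "Y1 \<subseteq> Y" "\<forall>x\<in>Y1. s1 x \<in> S" "a = (\<Sum>x\<in>Y1. s1 x * x)" using ig_elem[OF a] by blast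
  obtain Y2 s2 where 2: "finite Y2" "Y2 \<subseteq> Y" "\<forall>x\<in>Y2. s2 x \<in> S" "b = (\<Sum>x\<in>Y2. s2 x * x)" using ig_elem[OF b] by blast
  define t1 where "t1 x = (if x \<in> Y1 then s1 x else 0)" for x
  define t2 where "t2 x = (if x \<in> Y2 then s2 x else 0)" for x
  have f: "finite (Y1 \<union> Y2)" using 1 2 by auto
  have e1: "(\<Sum>x\<in>Y1 \<union> Y2. t1 x * x) = a"
    unfolding 1(4) by (rule sum.mono_neutral_cong_right[OF f]) (auto simp: t1_def)
  have e2: "(\<Sum>x\<in>Y1 \<union> Y2. t2 x * x) = b"
    unfolding 2(4) by (rule sum.mono_neutral_cong_right[OF f]) (auto simp: t2_def)
  have "(\<Sum>x\<in>Y1 \<union> Y2. (t1 x + t2 x) * x) = (\<Sum>x\<in>Y1 \<union> Y2. t1 x * x) + (\<Sum>x\<in>Y1 \<union> Y2. t2 x * x)"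
    unfolding distrib_right by (rule sum.distrib)
  hence "a + b = (\<Sum>x\<in>Y1 \<union> Y2. (t1 x + t2 x) * x)" unfolding e1 e2 by simp
  moreover have "\<forall>x\<in>Y1 \<union> Y2. t1 x + t2 x \<in> S"
    using 1(3) 2(3) subring_props[OF S] by (auto simp: t1_def t2_def)
  ultimately show ?thesis using ig_intro[OF f, of Y "\<lambda>x. t1 x + t2 x" S] 1(2) 2(2) by simp
qed

lemma ig_mult: assumes S: "is_subring S" and r: "r \<in> S" and a: "a \<in> ideal_gen S Y"
  shows "r * a \<in> ideal_gen S Y"
proof -
  obtain Y1 s1 where 1: "finite Y1" "Y1 \<subseteq> Y" "\<forall>x\<in>Y1. s1 x \<in> S" "a = (\<Sum>x\<in>Y1. s1 x * x)" using ig_elem[OF a] by blast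
  have "r * a = (\<Sum>x\<in>Y1. (r * s1 x) * x)" unfolding 1(4) by (simp add: sum_distrib_left mult.assoc)
  moreover have "\<forall>x\<in>Y1. r * s1 x \<in> S" using 1(3) subring_props(5)[OF S r] by auto
  ultimately show ?thesis using ig_intro[OF 1(1) 1(2), of "\<lambda>x. r * s1 x" S] by simp
qed

lemma ig_least: assumes "0 \<in> I" "\<And>x y. x \<in> I \<Longrightarrow> y \<in> I \<Longrightarrow> x + y \<in> I"
  "\<And>r x. r \<in> S \<Longrightarrow> x \<in> I \<Longrightarrow> r * x \<in> I" "Y \<subseteq> I"
  shows "ideal_gen S Y \<subseteq> I"
proof
  fix a assume a: "a \<in> ideal_gen S Y"
  obtain Y1 s1 where 1: "finite Y1" "Y1 \<subseteq> Y" "\<forall>x\<in>Y1. s1 x \<in> S" "a = (\<Sum>x\<in>Y1. s1 x * x)" using ig_elem[OF a] by blast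
  have "(\<Sum>x\<in>Y1. s1 x * x) \<in> I" using 1(1,2,3)
  proof (induction Y1 rule: finite_induct)
    case empty thus ?case using assms(1) by simp
  next
    case (insert y F)
    have r: "(\<Sum>x\<in>F. s1 x * x) \<in> I" using insert.IH insert.prems by blast
    have yI: "y \<in> I" using assms(4) insert.prems by blast
    have "s1 y \<in> S" using insert.prems by blast
    hence "s1 y * y \<in> I" using assms(3) yI by blast
    thus ?case using assms(2)[OF _ r] insert(1,2) by simp
  qed
  thus "a \<in> I" using 1 by simp
qed

lemma ig_sum: assumes "is_subring S" "finite I" "\<forall>i\<in>I. x i \<in> ideal_gen S Y"
  shows "sum x I \<in> ideal_gen S Y"
  using assms(2,3) by (induction I rule: finite_induct) (auto intro: ig_0 ig_add[OF assms(1)])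

lemma ig_least_ig: assumes "is_subring S" "W \<subseteq> ideal_gen S Z" shows "ideal_gen S W \<subseteq> ideal_gen S Z"
  by (rule ig_least) (auto intro: ig_0 ig_add[OF assms(1)] ig_mult[OF assms(1)] simp: assms(2))

lemma ig_eq: assumes "is_subring S" "Z \<subseteq> W" "W \<subseteq> ideal_gen S Z" shows "ideal_gen S W = ideal_gen S Z"
  using ig_least_ig[OF assms(1,3)] ig_mono[OF assms(2), of S S] by auto

lemma ig_sub: assumes "is_subring S" "Y \<subseteq> S" shows "ideal_gen S Y \<subseteq> S"
  by (rule ig_least) (use assms subring_props[OF assms(1)] in auto)

lemma ig_nz: assumes "is_subring S" "x \<in> ideal_gen S Y" "x \<noteq> 0" shows "nz_submodule S (ideal_gen S Y)"
proof -
  have "ideal_gen S Y \<noteq> {0}" using assms(2,3) by blast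
  thus ?thesis unfolding nz_submodule_def using ig_0 ig_add[OF assms(1)] ig_mult[OF assms(1)] by simp
qed

lemma S_nz: assumes "is_subring S" shows "nz_submodule S S"
  unfolding nz_submodule_def using subring_props[OF assms] by (metis singletonD zero_neq_one)

lemma st_mono: "semistar S st \<Longrightarrow> nz_submodule S E \<Longrightarrow> nz_submodule S F \<Longrightarrow> E \<subseteq> F \<Longrightarrow> st E \<subseteq> st F"
  unfolding semistar_def by blast

lemma homog_ideal:
  assumes gg: "good_grading S B" and Yh: "\<forall>y\<in>Y. \<exists>\<beta>. y \<in> B \<beta>" and a: "a \<in> ideal_gen S Y"
  shows "a \<in> S \<and> (\<forall>\<alpha>. comp B a \<alpha> \<in> ideal_gen S Y)"
proof -
  have S: "is_subring S" using gg_sub[OF gg] .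
  obtain Y1 s1 where 1: "finite Y1" "Y1 \<subseteq> Y" "\<forall>x\<in>Y1. s1 x \<in> S" "a = (\<Sum>x\<in>Y1. s1 x * x)" using ig_elem[OF a] by blast
  have "(\<Sum>x\<in>Y1. s1 x * x) \<in> S \<and> (\<forall>\<alpha>. comp B (\<Sum>x\<in>Y1. s1 x * x) \<alpha> \<in> ideal_gen S Y)" using 1(1,2,3)
  proof (induction Y1 rule: finite_induct)
    case empty
    have "comp B 0 = (\<lambda>\<alpha>. if \<alpha> = 0 then 0 else 0)" by (rule gg_homog_comp[OF gg gg_0[OF gg]])
    thus ?case using subring_props(1)[OF S] ig_0 by simp
  next
    case (insert y F)
    let ?r = "\<Sum>x\<in>F. s1 x * x"
    have IH: "?r \<in> S" "\<And>\<alpha>. comp B ?r \<alpha> \<in> ideal_gen S Y" using insert by auto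
    obtain \<beta> where y: "y \<in> B \<beta>" using Yh insert(4) by blast
    have yS: "y \<in> S" using gg_BS[OF gg y] .
    have sy: "s1 y \<in> S" using insert(5) by simp
    have syy: "s1 y * y \<in> S" using subring_props(5)[OF S sy yS] .
    have eq: "(\<Sum>x\<in>insert y F. s1 x * x) = s1 y * y + ?r" using insert(1,2) by simp
    have "comp B (s1 y * y + ?r) \<alpha> \<in> ideal_gen S Y" for \<alpha>
    proof -
      have "comp B (s1 y * y + ?r) \<alpha> = comp B (s1 y) (\<alpha> - \<beta>) * y + comp B ?r \<alpha>"
        using gg_comp_add[OF gg syy IH(1)] gg_comp_shift[OF gg sy y] by simp
      moreover have "comp B (s1 y) (\<alpha> - \<beta>) * y \<in> ideal_gen S Y"
        by (rule ig_mult[OF S gg_BS[OF gg decomp_in[OF gg_comp[OF gg sy]]]]) (use ig_gen[OF S] insert(4) in auto)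
      ultimately show ?thesis using ig_add[OF S _ IH(2)] by auto
    qed
    thus ?case using eq subring_props(3)[OF S syy IH(1)] by simp
  qed
  thus ?thesis using 1(4) by simp
qed

lemma Af_nz: assumes gg: "good_grading S B" and p: "p \<in> polys S" "p \<noteq> 0"
  shows "\<exists>x\<in>Af S B p. x \<noteq> 0"
proof -
  have S: "is_subring S" using gg_sub[OF gg] .
  obtain i where i: "coeff p i \<noteq> 0" using p(2) by (metis leading_coeff_0_iff)
  have c: "coeff p i \<in> S" using p(1) unfolding polys_def by auto
  obtain \<alpha> where \<alpha>: "comp B (coeff p i) \<alpha> \<noteq> 0" using gg_nz_comp[OF gg c i] by blast
  have "comp B (coeff p i) \<alpha> \<in> Cont S B (coeff p i)" unfolding Cont_def by (rule ig_gen[OF S]) simp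
  hence "comp B (coeff p i) \<alpha> \<in> Af S B p" unfolding Af_def by (intro ig_gen[OF S]) blast
  thus ?thesis using \<alpha> by blast
qed



context
  fixes \<Gamma> :: "'g::ab_group_add set" and R :: "'k::field set" and A :: "'g \<Rightarrow> 'k set"
  assumes gd: "graded_domain \<Gamma> R A"
begin

lemma gd_sub: "is_subring R" using gd unfolding graded_domain_def by blast
lemma gd_0: "0 \<in> A \<alpha>" using gd unfolding graded_domain_def additive_subgroup_def by blast
lemma gd_diff: "x \<in> A \<alpha> \<Longrightarrow> y \<in> A \<alpha> \<Longrightarrow> x - y \<in> A \<alpha>"
  using gd unfolding graded_domain_def additive_subgroup_def by blast
lemma gd_mult: "x \<in> A \<alpha> \<Longrightarrow> y \<in> A \<beta> \<Longrightarrow> x * y \<in> A (\<alpha>+\<beta>)"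
  using gd unfolding graded_domain_def by blast
lemma gd_R: "a \<in> R \<longleftrightarrow> (\<exists>f. is_decomp A a f)"
  using gd unfolding graded_domain_def by blast
lemma gd_uniq: "is_decomp A a f \<Longrightarrow> is_decomp A a g \<Longrightarrow> f = g"
  using gd unfolding graded_domain_def by blast

lemma gd_AR: assumes "x \<in> A \<alpha>" shows "x \<in> R"
proof -
  have "is_decomp A x (\<lambda>\<beta>. if \<beta> = \<alpha> then x else 0)"
    by (rule decomp_intro[where D="{\<alpha>}"]) (auto simp: assms gd_0)
  thus ?thesis using gd_R by blast
qed

lemma gd_zs: assumes "finite D" "\<forall>\<alpha>\<in>D. h \<alpha> \<in> A \<alpha>" "sum h D = 0" "\<alpha> \<in> D" shows "h \<alpha> = 0"
proof -
  define f where "f \<beta> = (if \<beta> \<in> D then h \<beta> else 0)" for \<beta>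
  have "is_decomp A 0 f"
  proof (rule decomp_intro[OF assms(1)])
    show "f \<beta> = 0" if "\<beta> \<notin> D" for \<beta> using that by (simp add: f_def)
    show "f \<beta> \<in> A \<beta>" for \<beta> using assms(2) gd_0 by (simp add: f_def)
    show "0 = sum f D" using assms(3) by (simp add: f_def)
  qed
  moreover have "is_decomp A 0 (\<lambda>_. 0)" by (rule decomp_intro[where D="{}"]) (auto simp: gd_0)
  ultimately have "f = (\<lambda>_. 0)" by (rule gd_uniq)
  hence "f \<alpha> = 0" by simp
  thus ?thesis using assms(4) by (simp add: f_def)
qed

lemma gd_gg: "good_grading R A"
proof -
  have h2: "\<forall>\<alpha>. 0 \<in> A \<alpha> \<and> (\<forall>x\<in>A \<alpha>. \<forall>y\<in>A \<alpha>. x - y \<in> A \<alpha>)" using gd_0 gd_diff by simp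
  have h3: "\<forall>\<alpha> \<beta>. \<forall>x\<in>A \<alpha>. \<forall>y\<in>A \<beta>. x*y \<in> A (\<alpha>+\<beta>)" using gd_mult by simp
  have h4: "\<forall>\<alpha>. A \<alpha> \<subseteq> R" using gd_AR by (simp add: subset_iff)
  have h5: "\<forall>a\<in>R. \<exists>f. is_decomp A a f" using gd_R by simp
  have h6: "\<forall>D h. finite D \<longrightarrow> (\<forall>\<alpha>\<in>D. h \<alpha> \<in> A \<alpha>) \<longrightarrow> sum h D = 0 \<longrightarrow> (\<forall>\<alpha>\<in>D. h \<alpha> = 0)"
  proof (intro allI impI ballI)
    fix D h \<alpha> assume "finite D" "\<forall>\<alpha>\<in>D. h \<alpha> \<in> A \<alpha>" "sum h D = 0" "\<alpha> \<in> D"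
    thus "h \<alpha> = 0" by (rule gd_zs)
  qed
  show ?thesis unfolding good_grading_def by (intro conjI gd_sub h2 h3 h4 h5 h6)
qed

lemma gd_nzh: "\<exists>b \<gamma>. b \<in> A \<gamma> \<and> b \<noteq> 0"
proof -
  have "(1::'k) \<in> R" using subring_props(2)[OF gd_sub] .
  from gg_nz_comp[OF gd_gg this] obtain \<gamma> where "comp A 1 \<gamma> \<noteq> 0" by auto
  moreover have "comp A 1 \<gamma> \<in> A \<gamma>" using decomp_in[OF gg_comp[OF gd_gg \<open>1 \<in> R\<close>]] .
  ultimately show ?thesis by blast
qed

lemma gd_one: "1 \<in> A 0"
  using gd_nzh gg_one[OF gd_gg] by blast

lemma rh_A: assumes "x \<in> A \<alpha>" shows "x \<in> RH_comp A \<alpha>"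
proof -
  have "x = x / 1 \<and> x \<in> A \<alpha> \<and> 1 \<in> A 0 \<and> (1::'k) \<noteq> 0 \<and> \<alpha> = \<alpha> - 0" using assms gd_one by simp
  thus ?thesis unfolding RH_comp_def by blast
qed

lemma rh_0: "0 \<in> RH_comp A \<alpha>" using rh_A gd_0 by blast

lemma rh_diff: assumes "x \<in> RH_comp A \<alpha>" "y \<in> RH_comp A \<alpha>" shows "x - y \<in> RH_comp A \<alpha>"
proof -
  obtain a b \<beta>1 \<gamma>1 where 1: "x = a/b" "a \<in> A \<beta>1" "b \<in> A \<gamma>1" "b \<noteq> 0" "\<alpha> = \<beta>1 - \<gamma>1"
    using assms(1) unfolding RH_comp_def by blast
  obtain c d \<beta>2 \<gamma>2 where 2: "y = c/d" "c \<in> A \<beta>2" "d \<in> A \<gamma>2" "d \<noteq> 0" "\<alpha> = \<beta>2 - \<gamma>2"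
    using assms(2) unfolding RH_comp_def by blast
  have e: "\<beta>2 + \<gamma>1 = \<beta>1 + \<gamma>2" using 1(5) 2(5) by (metis add.commute diff_add_eq diff_eq_eq)
  have "a * d \<in> A (\<beta>1 + \<gamma>2)" using gd_mult 1 2 by blast
  moreover have "c * b \<in> A (\<beta>1 + \<gamma>2)" using gd_mult[OF 2(2) 1(3)] e by simp
  ultimately have n: "a * d - c * b \<in> A (\<beta>1 + \<gamma>2)" by (rule gd_diff)
  have dd: "b * d \<in> A (\<gamma>1 + \<gamma>2)" "b * d \<noteq> 0" using gd_mult[OF 1(3) 2(3)] 1(4) 2(4) by auto
  have "x - y = (a * d - c * b) / (b * d)" using 1(1,4) 2(1,4) by (simp add: field_simps)
  moreover have "\<alpha> = (\<beta>1 + \<gamma>2) - (\<gamma>1 + \<gamma>2)" using 1(5) by simp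
  ultimately show ?thesis unfolding RH_comp_def using n dd by blast
qed

lemma rh_mult: assumes "x \<in> RH_comp A \<alpha>" "y \<in> RH_comp A \<alpha>'" shows "x * y \<in> RH_comp A (\<alpha> + \<alpha>')"
proof -
  obtain a b \<beta>1 \<gamma>1 where 1: "x = a/b" "a \<in> A \<beta>1" "b \<in> A \<gamma>1" "b \<noteq> 0" "\<alpha> = \<beta>1 - \<gamma>1"
    using assms(1) unfolding RH_comp_def by blast
  obtain c d \<beta>2 \<gamma>2 where 2: "y = c/d" "c \<in> A \<beta>2" "d \<in> A \<gamma>2" "d \<noteq> 0" "\<alpha>' = \<beta>2 - \<gamma>2"
    using assms(2) unfolding RH_comp_def by blast
  have n: "a * c \<in> A (\<beta>1 + \<beta>2)" using gd_mult 1 2 by blast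
  have dd: "b * d \<in> A (\<gamma>1 + \<gamma>2)" "b * d \<noteq> 0" using gd_mult[OF 1(3) 2(3)] 1(4) 2(4) by auto
  have "x * y = (a * c) / (b * d)" using 1(1) 2(1) by simp
  moreover have "\<alpha> + \<alpha>' = (\<beta>1 + \<beta>2) - (\<gamma>1 + \<gamma>2)" using 1(5) 2(5) by simp
  ultimately show ?thesis unfolding RH_comp_def using n dd by blast
qed

lemma gd_prod: "finite D \<Longrightarrow> (\<forall>\<alpha>\<in>D. b \<alpha> \<in> A (\<gamma> \<alpha>)) \<Longrightarrow> prod b D \<in> A (sum \<gamma> D)"
proof (induction D rule: finite_induct)
  case empty thus ?case using gd_one by simp
next
  case (insert x F)
  hence "b x * prod b F \<in> A (\<gamma> x + sum \<gamma> F)" using gd_mult by simp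
  thus ?case using insert(1,2) by simp
qed

lemma rh_zs: assumes fD: "finite D" and hD: "\<forall>\<alpha>\<in>D. h \<alpha> \<in> RH_comp A \<alpha>" and hs: "sum h D = 0" and aD: "\<alpha> \<in> D"
  shows "h \<alpha> = 0"
proof -
  have "\<forall>\<alpha>\<in>D. \<exists>p. snd p \<in> A (fst p) \<and> snd p \<noteq> 0 \<and> h \<alpha> * snd p \<in> A (\<alpha> + fst p)"
  proof
    fix \<alpha> assume "\<alpha> \<in> D"
    then obtain a b \<beta> \<gamma> where 1: "h \<alpha> = a/b" "a \<in> A \<beta>" "b \<in> A \<gamma>" "b \<noteq> 0" "\<alpha> = \<beta> - \<gamma>"
      using hD unfolding RH_comp_def by blast
    have "h \<alpha> * b = a" using 1(1,4) by simp
    moreover have "\<alpha> + \<gamma> = \<beta>" using 1(5) by simp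
    ultimately have "h \<alpha> * b \<in> A (\<alpha> + \<gamma>)" using 1(2) by simp
    thus "\<exists>p. snd p \<in> A (fst p) \<and> snd p \<noteq> 0 \<and> h \<alpha> * snd p \<in> A (\<alpha> + fst p)"
      using 1(3,4) by (intro exI[of _ "(\<gamma>, b)"]) simp
  qed
  hence "\<exists>p. \<forall>\<alpha>\<in>D. snd (p \<alpha>) \<in> A (fst (p \<alpha>)) \<and> snd (p \<alpha>) \<noteq> 0 \<and> h \<alpha> * snd (p \<alpha>) \<in> A (\<alpha> + fst (p \<alpha>))"
    by (rule bchoice)
  then obtain p where p: "\<forall>\<alpha>\<in>D. snd (p \<alpha>) \<in> A (fst (p \<alpha>)) \<and> snd (p \<alpha>) \<noteq> 0 \<and> h \<alpha> * snd (p \<alpha>) \<in> A (\<alpha> + fst (p \<alpha>))"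
    by (rule exE)
  define b where "b \<alpha> = snd (p \<alpha>)" for \<alpha>
  define \<gamma> where "\<gamma> \<alpha> = fst (p \<alpha>)" for \<alpha>
  have bA: "\<forall>\<alpha>\<in>D. b \<alpha> \<in> A (\<gamma> \<alpha>)" and bnz: "\<forall>\<alpha>\<in>D. b \<alpha> \<noteq> 0" and hb: "\<forall>\<alpha>\<in>D. h \<alpha> * b \<alpha> \<in> A (\<alpha> + \<gamma> \<alpha>)"
    using p unfolding b_def \<gamma>_def by auto
  define P where "P = prod b D"
  define G where "G = sum \<gamma> D"
  have Pnz: "P \<noteq> 0" unfolding P_def using bnz fD by simp
  have hP: "h \<beta> * P \<in> A (\<beta> + G)" if "\<beta> \<in> D" for \<beta>
  proof -
    have Pe: "P = b \<beta> * prod b (D - {\<beta>})" unfolding P_def using fD that by (simp add: prod.remove)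
    have eq1: "h \<beta> * P = (h \<beta> * b \<beta>) * prod b (D - {\<beta>})" unfolding Pe by (simp add: mult.assoc)
    have pr: "prod b (D - {\<beta>}) \<in> A (sum \<gamma> (D - {\<beta>}))" using gd_prod[of "D - {\<beta>}" b \<gamma>] fD bA by simp
    have m: "(h \<beta> * b \<beta>) * prod b (D - {\<beta>}) \<in> A ((\<beta> + \<gamma> \<beta>) + sum \<gamma> (D - {\<beta>}))"
      by (rule gd_mult[OF bspec[OF hb that] pr])
    have eqG: "G = \<gamma> \<beta> + sum \<gamma> (D - {\<beta>})" unfolding G_def using fD that by (simp add: sum.remove)
    have e: "\<beta> + G = (\<beta> + \<gamma> \<beta>) + sum \<gamma> (D - {\<beta>})" unfolding eqG by (simp add: add.assoc)
    show ?thesis unfolding eq1 e by (rule m)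
  qed
  define D' where "D' = (\<lambda>\<beta>. \<beta> + G) ` D"
  define h' where "h' \<delta> = h (\<delta> - G) * P" for \<delta>
  have fD': "finite D'" unfolding D'_def using fD by simp
  have "sum h' D' = sum (h' \<circ> (\<lambda>\<beta>. \<beta> + G)) D" unfolding D'_def by (rule sum.reindex) (auto simp: inj_on_def)
  also have "\<dots> = sum h D * P" by (simp add: h'_def sum_distrib_right)
  finally have s0: "sum h' D' = 0" using hs by simp
  have inA: "\<forall>\<delta>\<in>D'. h' \<delta> \<in> A \<delta>"
  proof
    fix \<delta> assume "\<delta> \<in> D'"
    then obtain \<beta> where "\<beta> \<in> D" "\<delta> = \<beta> + G" unfolding D'_def by blast
    thus "h' \<delta> \<in> A \<delta>" using hP unfolding h'_def by simp
  qed
  have "\<alpha> + G \<in> D'" unfolding D'_def using aD by blast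
  from gd_zs[OF fD' inA s0 this] have "h \<alpha> * P = 0" by (simp add: h'_def)
  thus ?thesis using Pnz by simp
qed

end

context
  fixes \<Gamma> :: "'g::ab_group_add set" and R T :: "'k::field set" and A :: "'g \<Rightarrow> 'k set"
  assumes gd: "graded_domain \<Gamma> R A" and ho: "homogeneous_overring R A T"
begin

lemma ho_sub: "is_subring T" using ho unfolding homogeneous_overring_def by blast
lemma ho_RT: "R \<subseteq> T" using ho unfolding homogeneous_overring_def by blast

lemma ho_gg: "good_grading T (over_comp T A)"
proof -
  have h2: "\<forall>\<alpha>. 0 \<in> over_comp T A \<alpha> \<and> (\<forall>x\<in>over_comp T A \<alpha>. \<forall>y\<in>over_comp T A \<alpha>. x - y \<in> over_comp T A \<alpha>)"
    unfolding over_comp_def using subring_props(1,4)[OF ho_sub] rh_0[OF gd] rh_diff[OF gd] by simp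
  have h3: "\<forall>\<alpha> \<beta>. \<forall>x\<in>over_comp T A \<alpha>. \<forall>y\<in>over_comp T A \<beta>. x*y \<in> over_comp T A (\<alpha>+\<beta>)"
    unfolding over_comp_def using subring_props(5)[OF ho_sub] rh_mult[OF gd] by simp
  have h4: "\<forall>\<alpha>. over_comp T A \<alpha> \<subseteq> T" unfolding over_comp_def by simp
  have h5: "\<forall>a\<in>T. \<exists>f. is_decomp (over_comp T A) a f" using ho unfolding homogeneous_overring_def by simp
  have h6: "\<forall>D h. finite D \<longrightarrow> (\<forall>\<alpha>\<in>D. h \<alpha> \<in> over_comp T A \<alpha>) \<longrightarrow> sum h D = 0 \<longrightarrow> (\<forall>\<alpha>\<in>D. h \<alpha> = 0)"
  proof (intro allI impI ballI)
    fix D h \<alpha> assume a: "finite D" "\<forall>\<alpha>\<in>D. h \<alpha> \<in> over_comp T A \<alpha>" "sum h D = 0" "\<alpha> \<in> D"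
    have "\<forall>\<alpha>\<in>D. h \<alpha> \<in> RH_comp A \<alpha>" using a(2) unfolding over_comp_def by simp
    thus "h \<alpha> = 0" using rh_zs[OF gd a(1) _ a(3,4)] by simp
  qed
  show ?thesis unfolding good_grading_def by (intro conjI ho_sub h2 h3 h4 h5 h6)
qed

lemma A_over: "x \<in> A \<alpha> \<Longrightarrow> x \<in> over_comp T A \<alpha>"
  unfolding over_comp_def using rh_A[OF gd] gd_AR[OF gd] ho_RT by blast

lemma comp_over: assumes "c \<in> R" shows "comp (over_comp T A) c = comp A c"
proof (rule gg_comp_eq[OF ho_gg])
  have "is_decomp A c (comp A c)" using gg_comp[OF gd_gg[OF gd] assms] .
  thus "is_decomp (over_comp T A) c (comp A c)" unfolding is_decomp_def using A_over by blast
qed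

end



lemma range_homog: assumes "good_grading S B" "c \<in> B \<beta>" shows "range (comp B c) \<subseteq> {c, 0}"
  using gg_homog_comp[OF assms] by auto

lemma comp_homog_self: assumes "good_grading S B" "c \<in> B \<beta>" shows "c \<in> range (comp B c)"
proof -
  have "comp B c \<beta> = c" using gg_homog_comp[OF assms] by simp
  thus ?thesis by (metis rangeI)
qed

lemma range_comp_homog: assumes "good_grading S B" "c \<in> S" shows "\<forall>y\<in>range (comp B c). \<exists>\<beta>. y \<in> B \<beta>"
  using decomp_in[OF gg_comp[OF assms]] by blast

lemma forward_dir:
  fixes \<Gamma> :: "'g::ab_group_add set" and R T :: "'k::field set" and A :: "'g \<Rightarrow> 'k set"
    and st st' :: "'k set \<Rightarrow> 'k set"
  assumes gd: "graded_domain \<Gamma> R A" and ho: "homogeneous_overring R A T"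
    and lk: "homog_linked R A st T st'"
    and f: "f \<in> Nset R A st"
  shows "f \<in> Nset T (over_comp T A) st'"
proof -
  let ?B = "over_comp T A"
  have ggR: "good_grading R A" by (rule gd_gg[OF gd])
  have ggT: "good_grading T ?B" by (rule ho_gg[OF gd ho])
  have Rs: "is_subring R" by (rule gd_sub[OF gd])
  have Ts: "is_subring T" by (rule ho_sub[OF gd ho])
  have RT: "R \<subseteq> T" by (rule ho_RT[OF gd ho])
  have fR: "f \<in> polys R" "f \<noteq> 0" "st (Af R A f) = st R" using f unfolding Nset_def by auto
  have cR: "coeff f i \<in> R" for i using fR(1) unfolding polys_def by auto
  define Z where "Z = (\<Union>i. range (comp A (coeff f i)))"
  define F where "F = Af R A f"
  have Zh: "\<forall>y\<in>Z. \<exists>\<beta>. y \<in> A \<beta>" unfolding Z_def using range_comp_homog[OF ggR cR] by blast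
  have ZR: "Z \<subseteq> R" using Zh gg_BS[OF ggR] by blast
  have FZ: "F = ideal_gen R Z" unfolding F_def Af_def
  proof (rule ig_eq[OF Rs])
    show "Z \<subseteq> (\<Union>i. Cont R A (coeff f i))" unfolding Z_def Cont_def by (intro UN_mono[OF subset_refl] subsetI ig_gen[OF Rs])
    show "(\<Union>i. Cont R A (coeff f i)) \<subseteq> ideal_gen R Z" unfolding Cont_def Z_def
      by (intro UN_least ig_mono) auto
  qed
  have finZ: "finite Z"
  proof -
    have c0: "comp A (0::'k) = (\<lambda>\<alpha>. if \<alpha> = 0 then 0 else 0)" by (rule gg_homog_comp[OF ggR gd_0[OF gd]])
    have "Z \<subseteq> (\<Union>i\<in>{..degree f}. range (comp A (coeff f i))) \<union> {0}"
    proof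
      fix y assume "y \<in> Z"
      then obtain i where i: "y \<in> range (comp A (coeff f i))" unfolding Z_def by blast
      show "y \<in> (\<Union>i\<in>{..degree f}. range (comp A (coeff f i))) \<union> {0}"
      proof (cases "i \<le> degree f")
        case True thus ?thesis using i by blast
      next
        case False hence "coeff f i = 0" by (simp add: coeff_eq_0)
        thus ?thesis using i c0 by auto
      qed
    qed
    moreover have "finite ((\<Union>i\<in>{..degree f}. range (comp A (coeff f i))) \<union> {0})"
      using gg_range_fin[OF ggR cR] by simp
    ultimately show ?thesis by (rule finite_subset)
  qed
  have Fnz: "F \<noteq> {0}" unfolding F_def using Af_nz[OF ggR fR(1,2)] by blast
  have Fh: "\<forall>a\<in>F. \<forall>\<alpha>. comp A a \<alpha> \<in> F" unfolding FZ using homog_ideal[OF ggR Zh] by blast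
  have hfg: "homog_fg_ideal R A F" unfolding homog_fg_ideal_def
    by (intro conjI Fnz Fh exI[of _ Z] finZ ZR FZ)
  have "st F = st R" using fR(3) unfolding F_def .
  hence lkF: "st' (ideal_gen T F) = st' T" using lk hfg unfolding homog_linked_def by blast
  have e1: "ideal_gen T F = ideal_gen T Z"
  proof (rule ig_eq[OF Ts])
    show "Z \<subseteq> F" unfolding FZ using ig_gen[OF Rs] by blast
    show "F \<subseteq> ideal_gen T Z" unfolding FZ by (rule ig_mono) (use RT in auto)
  qed
  have e2: "Af T ?B f = ideal_gen T Z" unfolding Af_def Cont_def comp_over[OF gd ho cR]
  proof (rule ig_eq[OF Ts])
    show "Z \<subseteq> (\<Union>i. ideal_gen T (range (comp A (coeff f i))))" unfolding Z_def by (intro UN_mono[OF subset_refl] subsetI ig_gen[OF Ts])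
    show "(\<Union>i. ideal_gen T (range (comp A (coeff f i)))) \<subseteq> ideal_gen T Z" unfolding Z_def
      by (intro UN_least ig_mono) auto
  qed
  have "f \<in> polys T" using fR(1) RT unfolding polys_def by blast
  thus ?thesis unfolding Nset_def using fR(2) lkF e1 e2 by simp
qed

lemma in_Un0: "c \<in> X \<union> {0} \<Longrightarrow> X \<subseteq> I \<Longrightarrow> 0 \<in> I \<Longrightarrow> c \<in> I"
  by auto

lemma sub2: "B \<subseteq> {c, 0} \<Longrightarrow> c \<in> I \<Longrightarrow> 0 \<in> I \<Longrightarrow> B \<subseteq> I"
  by auto

lemma ig_gen_sub: "is_subring S \<Longrightarrow> Y \<subseteq> ideal_gen S Y"
  using ig_gen by blast

lemma nth_default_in: "nth_default 0 xs i \<in> set xs \<union> {0}"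
  by (auto simp: nth_default_def)

lemma backward_dir:
  fixes \<Gamma> :: "'g::ab_group_add set" and R T :: "'k::field set" and A :: "'g \<Rightarrow> 'k set"
    and st st' :: "'k set \<Rightarrow> 'k set"
  assumes gd: "graded_domain \<Gamma> R A" and ho: "homogeneous_overring R A T"
    and sst: "semistar T st'"
    and sub: "NA R A st \<subseteq> NA T (over_comp T A) st'"
    and hF: "homog_fg_ideal R A F" and stF: "st F = st R"
  shows "st' (ideal_gen T F) = st' T"
proof -
  let ?B = "over_comp T A"
  have ggR: "good_grading R A" by (rule gd_gg[OF gd])
  have ggT: "good_grading T ?B" by (rule ho_gg[OF gd ho])
  have Rs: "is_subring R" by (rule gd_sub[OF gd])
  have Ts: "is_subring T" by (rule ho_sub[OF gd ho])
  have RT: "R \<subseteq> T" by (rule ho_RT[OF gd ho])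
  obtain X where X: "finite X" "X \<subseteq> R" "F = ideal_gen R X" using hF unfolding homog_fg_ideal_def by blast
  have Fnz: "F \<noteq> {0}" and Fh: "\<forall>a\<in>F. \<forall>\<alpha>. comp A a \<alpha> \<in> F" using hF unfolding homog_fg_ideal_def by auto
  define X' where "X' = (\<Union>x\<in>X. range (comp A x))"
  have finX': "finite X'" unfolding X'_def using X(1,2) gg_range_fin[OF ggR] by auto
  have X'h: "\<forall>y\<in>X'. \<exists>\<beta>. y \<in> A \<beta>" unfolding X'_def using range_comp_homog[OF ggR] X(2) by blast
  have X'hB: "\<forall>y\<in>X'. \<exists>\<beta>. y \<in> ?B \<beta>" using X'h A_over[OF gd ho] by blast
  have X'R: "X' \<subseteq> R" using X'h gg_BS[OF ggR] by blast
  have X'T: "X' \<subseteq> T" using X'R RT by blast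
  have XF: "X \<subseteq> F" unfolding X(3) using ig_gen[OF Rs] by blast
  have X'F: "X' \<subseteq> F" unfolding X'_def using XF Fh by blast
  have FX': "F = ideal_gen R X'"
  proof
    show "ideal_gen R X' \<subseteq> F" unfolding X(3) by (rule ig_least_ig[OF Rs]) (use X'F X(3) in simp)
    show "F \<subseteq> ideal_gen R X'" unfolding X(3)
    proof (rule ig_least_ig[OF Rs], rule subsetI)
      fix x assume x: "x \<in> X"
      hence xR: "x \<in> R" using X(2) by blast
      have "x = sum (comp A x) {\<alpha>. comp A x \<alpha> \<noteq> 0}"
        by (rule decomp_sum[OF gg_comp[OF ggR xR] decomp_fin[OF gg_comp[OF ggR xR]]]) simp
      moreover have "sum (comp A x) {\<alpha>. comp A x \<alpha> \<noteq> 0} \<in> ideal_gen R X'"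
      proof (rule ig_sum[OF Rs decomp_fin[OF gg_comp[OF ggR xR]]], rule ballI)
        fix \<alpha> have "comp A x \<alpha> \<in> X'" unfolding X'_def using x by blast
        thus "comp A x \<alpha> \<in> ideal_gen R X'" by (rule ig_gen[OF Rs])
      qed
      ultimately show "x \<in> ideal_gen R X'" by simp
    qed
  qed
  obtain x0 where x0: "x0 \<in> X'" "x0 \<noteq> 0"
  proof (rule ccontr)
    assume "\<not> thesis"
    hence "X' \<subseteq> {0}" using that by blast
    hence "ideal_gen R X' \<subseteq> {0}" by (intro ig_least) auto
    thus False using Fnz FX' ig_0 by blast
  qed
  obtain xs where xs: "set xs = X'" using finite_list[OF finX'] by blast
  define f where "f = Poly xs"
  have cf: "coeff f i \<in> X' \<union> {0}" for i unfolding f_def using nth_default_in[of xs i] xs by simp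
  have cfR: "coeff f i \<in> R" for i
  proof -
    have "coeff f i \<in> X' \<union> {0}" by (rule cf)
    hence "coeff f i \<in> X' \<or> coeff f i = 0" by (simp only: Un_iff singleton_iff)
    thus ?thesis
    proof
      assume "coeff f i \<in> X'" thus ?thesis using X'R by (rule subsetD[rotated])
    next
      assume "coeff f i = 0" thus ?thesis using subring_props(1)[OF Rs] by simp
    qed
  qed
  have cfh: "\<exists>\<beta>. coeff f i \<in> A \<beta>" for i
  proof -
    have "coeff f i \<in> X' \<union> {0}" by (rule cf)
    hence "coeff f i \<in> X' \<or> coeff f i = 0" by (simp only: Un_iff singleton_iff)
    thus ?thesis
    proof
      assume "coeff f i \<in> X'" thus ?thesis using X'h by (rule bspec[rotated])
    next
      assume "coeff f i = 0" thus ?thesis using gd_0[OF gd] by simp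
    qed
  qed
  have fpR: "f \<in> polys R" unfolding polys_def using cfR by blast
  have fnz: "f \<noteq> 0"
  proof
    assume "f = 0"
    obtain i where "i < length xs" "xs ! i = x0" using x0(1) xs by (metis in_set_conv_nth)
    hence "coeff f i = x0" unfolding f_def by (simp add: nth_default_def)
    thus False using x0(2) \<open>f = 0\<close> by simp
  qed
  have AfR: "Af R A f = ideal_gen R X'" unfolding Af_def
  proof (rule ig_eq[OF Rs])
    show "X' \<subseteq> (\<Union>i. Cont R A (coeff f i))"
    proof
      fix x assume x: "x \<in> X'"
      obtain i where "i < length xs" "xs ! i = x" using x xs by (metis in_set_conv_nth)
      hence ci: "coeff f i = x" unfolding f_def by (simp add: nth_default_def)
      obtain \<beta> where "x \<in> A \<beta>" using X'h x by blast
      hence "x \<in> range (comp A x)" by (rule comp_homog_self[OF ggR])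
      hence "x \<in> Cont R A (coeff f i)" unfolding ci Cont_def by (rule ig_gen[OF Rs])
      thus "x \<in> (\<Union>i. Cont R A (coeff f i))" by blast
    qed
    show "(\<Union>i. Cont R A (coeff f i)) \<subseteq> ideal_gen R X'"
    proof (rule UN_least)
      fix i
      obtain \<beta> where \<beta>: "coeff f i \<in> A \<beta>" using cfh by blast
      have "range (comp A (coeff f i)) \<subseteq> {coeff f i, 0}" by (rule range_homog[OF ggR \<beta>])
      moreover have "coeff f i \<in> ideal_gen R X'" by (rule in_Un0[OF cf ig_gen_sub[OF Rs] ig_0])
      ultimately have "range (comp A (coeff f i)) \<subseteq> ideal_gen R X'" using ig_0 by (rule sub2)
      thus "Cont R A (coeff f i) \<subseteq> ideal_gen R X'" unfolding Cont_def by (rule ig_least_ig[OF Rs])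
    qed
  qed
  have fN: "f \<in> Nset R A st" unfolding Nset_def using fpR fnz AfR FX' stF by simp
  have "(1::'k poly) \<in> polys R" unfolding polys_def using subring_props(1,2)[OF Rs] by simp
  hence "Fract 1 f \<in> NA R A st" unfolding NA_def using fN by blast
  hence "Fract 1 f \<in> NA T ?B st'" using sub by blast
  then obtain g h where gh: "Fract 1 f = Fract g h" "g \<in> polys T" "h \<in> Nset T ?B st'"
    unfolding NA_def by blast
  have hN: "h \<in> polys T" "h \<noteq> 0" "st' (Af T ?B h) = st' T" using gh(3) unfolding Nset_def by auto
  have "1 * h = g * f" using gh(1) eq_fract(1)[OF fnz hN(2)] by simp
  hence hgf: "h = g * f" by simp
  have cfT: "coeff f j \<in> ideal_gen T X'" for j by (rule in_Un0[OF cf ig_gen_sub[OF Ts] ig_0])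
  have chI: "coeff h k \<in> ideal_gen T X'" for k
  proof -
    have "coeff h k = (\<Sum>i\<le>k. coeff g i * coeff f (k - i))" unfolding hgf by (rule coeff_mult)
    moreover have "(\<Sum>i\<le>k. coeff g i * coeff f (k - i)) \<in> ideal_gen T X'"
    proof (rule ig_sum[OF Ts], simp, rule ballI)
      fix i have "coeff g i \<in> T" using gh(2) unfolding polys_def by blast
      thus "coeff g i * coeff f (k - i) \<in> ideal_gen T X'" by (rule ig_mult[OF Ts _ cfT])
    qed
    ultimately show ?thesis by simp
  qed
  have AfT: "Af T ?B h \<subseteq> ideal_gen T X'" unfolding Af_def
  proof (rule ig_least_ig[OF Ts], rule UN_least)
    fix k
    have "range (comp ?B (coeff h k)) \<subseteq> ideal_gen T X'"
      using homog_ideal[OF ggT X'hB chI[of k]] by blast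
    thus "Cont T ?B (coeff h k) \<subseteq> ideal_gen T X'" unfolding Cont_def by (rule ig_least_ig[OF Ts])
  qed
  have FT: "ideal_gen T F = ideal_gen T X'"
  proof (rule ig_eq[OF Ts X'F])
    show "F \<subseteq> ideal_gen T X'" unfolding FX' by (rule ig_mono) (use RT in auto)
  qed
  obtain z where z: "z \<in> Af T ?B h" "z \<noteq> 0" using Af_nz[OF ggT hN(1,2)] by blast
  have nz1: "nz_submodule T (Af T ?B h)" unfolding Af_def by (rule ig_nz[OF Ts]) (use z in \<open>auto simp: Af_def\<close>)
  have nz2: "nz_submodule T (ideal_gen T X')" by (rule ig_nz[OF Ts ig_gen[OF Ts x0(1)] x0(2)])
  have nz3: "nz_submodule T T" by (rule S_nz[OF Ts])
  have s1: "st' (Af T ?B h) \<subseteq> st' (ideal_gen T X')" by (rule st_mono[OF sst nz1 nz2 AfT])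
  have s2: "st' (ideal_gen T X') \<subseteq> st' T" by (rule st_mono[OF sst nz2 nz3 ig_sub[OF Ts X'T]])
  show ?thesis unfolding FT using s1 s2 hN(3) by blast
qed


theorem lemma2p8:
  fixes \<Gamma> :: "'g::ab_group_add set" and R T :: "'k::field set" and A :: "'g \<Rightarrow> 'k set"
    and st st' :: "'k set \<Rightarrow> 'k set"
  assumes "graded_domain \<Gamma> R A"
    and "\<forall>x::'k. \<exists>a\<in>R. \<exists>b\<in>R. b \<noteq> 0 \<and> x = a / b"
    and "homogeneous_overring R A T"
    and "semistar R st"
    and "semistar T st'"
  shows "homog_linked R A st T st' \<longleftrightarrow> NA R A st \<subseteq> NA T (over_comp T A) st'"
proof
  assume lk: "homog_linked R A st T st'"
  show "NA R A st \<subseteq> NA T (over_comp T A) st'"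
  proof
    fix q assume "q \<in> NA R A st"
    then obtain g f where q: "q = Fract g f" "g \<in> polys R" "f \<in> Nset R A st" unfolding NA_def by blast
    have RT: "R \<subseteq> T" by (rule ho_RT[OF assms(1,3)])
    have "g \<in> polys T" using q(2) RT unfolding polys_def by (simp add: subset_iff)
    moreover have "f \<in> Nset T (over_comp T A) st'" by (rule forward_dir[OF assms(1,3) lk q(3)])
    ultimately show "q \<in> NA T (over_comp T A) st'" unfolding NA_def using q(1) by blast
  qed
next
  assume sub: "NA R A st \<subseteq> NA T (over_comp T A) st'"
  show "homog_linked R A st T st'" unfolding homog_linked_def
  proof (intro allI impI)
    fix F assume h: "homog_fg_ideal R A F \<and> st F = st R"
    show "st' (ideal_gen T F) = st' T" by (rule backward_dir[OF assms(1,3,5) sub conjunct1[OF h] conjunct2[OF h]])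
  qed
qed

end
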